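(* Let $\mathbb{F}_q$ be the finite field with $q$ elements and characteristic $p$. Let $m$ be a positive integer dividing $q-1$ and let $H \subseteq \mathbb{F}_q^*$ be the multiplicative subgroup of index $m$ (so $|H|=(q-1)/m$). Let $k$ be an integer with $1\le k\le (q-1)/m$. For $b\in\mathbb{F}_q$ let $M_H(k,b)$ be the number of $k$-element subsets $S\subseteq H$ with $\sum_{a\in S}a=b$. Then for every $b\in\mathbb{F}_q^*$, $$\left|M_H(k,b)-\frac{1}{q}\binom{(q-1)/m}{k}\right|\le \frac{2}{\sqrt q}\binom{\sqrt q+k+\frac{q}{mp}}{k},$$ and for $b=0$, $$\left|M_H(k,0)-\frac{1}{q}\binom{(q-1)/m}{k}\right|\le \binom{\sqrt q+k+\frac{q}{mp}}{k}.$$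
   Context: For a real number $t$ and a nonnegative integer $k$, $\binom{t}{k}=\frac{t(t-1)\cdots(t-k+1)}{k!}$. *)

theory Defs
  imports Complex_Main
begin

definition subset_sum_count :: "'a::comm_monoid_add set \<Rightarrow> nat \<Rightarrow> 'a \<Rightarrow> nat" where
  "subset_sum_count H k b = card {S. S \<subseteq> H \<and> card S = k \<and> (\<Sum>a\<in>S. a) = b}"

definition mult_subgroup :: "'a::field set \<Rightarrow> bool" where
  "mult_subgroup H \<longleftrightarrow> H \<subseteq> - {0} \<and> 1 \<in> H \<and> (\<forall>x\<in>H. \<forall>y\<in>H. x * y \<in> H)
      \<and> (\<forall>x\<in>H. inverse x \<in> H)"

end

theory Submission
  imports Defs "HOL-Computational_Algebra.Computational_Algebra" "HOL-Analysis.L2_Norm"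
begin


definition esym :: "('b \<Rightarrow> complex) \<Rightarrow> 'b set \<Rightarrow> nat \<Rightarrow> complex" where
  "esym z H k = (\<Sum>B | B \<subseteq> H \<and> card B = k. \<Prod>a\<in>B. z a)"

definition Gz :: "complex \<Rightarrow> complex fps" where
  "Gz w = Abs_fps (\<lambda>j. if j = 0 then 0 else (-1)^(j-1) * w^j)"

lemma Gz_eq: "(1 + fps_const w * fps_X) * Gz w = fps_const w * fps_X"
proof (rule fps_ext)
  fix n
  show "fps_nth ((1 + fps_const w * fps_X) * Gz w) n = fps_nth (fps_const w * fps_X) n"
  proof (cases n)
    case 0 then show ?thesis by (simp add: Gz_def)
  next
    case (Suc m)
    have "fps_nth ((1 + fps_const w * fps_X) * Gz w) n = fps_nth (Gz w) n + w * fps_nth (Gz w) m"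
      by (simp add: distrib_right Suc mult.assoc)
    then show ?thesis by (cases m) (auto simp: Gz_def Suc)
  qed
qed

lemma fps_newton:
  assumes "finite H"
  shows "fps_X * fps_deriv (\<Prod>a\<in>H. 1 + fps_const (z a) * fps_X)
     = (\<Prod>a\<in>H. 1 + fps_const (z a) * fps_X) * (\<Sum>a\<in>H. Gz (z a))"
  using assms
proof (induction H rule: finite_induct)
  case empty then show ?case by simp
next
  case (insert x F)
  define P where "P = (\<Prod>a\<in>F. 1 + fps_const (z a) * fps_X)"
  define G where "G = (\<Sum>a\<in>F. Gz (z a))"
  have IH: "fps_X * fps_deriv P = P * G" using insert P_def G_def by simp
  have "fps_X * fps_deriv ((1 + fps_const (z x) * fps_X) * P)
      = fps_const (z x) * fps_X * P + (1 + fps_const (z x) * fps_X) * (fps_X * fps_deriv P)"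
    by (simp add: algebra_simps)
  also have "\<dots> = (1 + fps_const (z x) * fps_X) * Gz (z x) * P + (1 + fps_const (z x) * fps_X) * (P * G)"
    by (simp add: Gz_eq IH)
  also have "\<dots> = ((1 + fps_const (z x) * fps_X) * P) * (Gz (z x) + G)"
    by (simp add: algebra_simps)
  finally show ?case using insert by (simp add: P_def G_def)
qed

lemma fps_const_prod': "fps_const (\<Prod>x\<in>X. f x) = (\<Prod>x\<in>X. fps_const (f x))"
  by (induction X rule: infinite_finite_induct) (auto simp: fps_const_mult[symmetric])

lemma prod_fps_nth:
  assumes "finite H"
  shows "fps_nth (\<Prod>a\<in>H. 1 + fps_const (z a) * fps_X) k = esym z H k"
proof -
  have "(\<Prod>a\<in>H. 1 + fps_const (z a) * fps_X) = (\<Prod>a\<in>H. fps_const (z a) * fps_X + 1)"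
    by (simp add: add.commute)
  also have "\<dots> = (\<Sum>X\<in>Pow H. (\<Prod>x\<in>X. fps_const (z x) * fps_X) * (\<Prod>x\<in>H-X. 1))"
    by (rule prod_add[OF assms])
  also have "\<dots> = (\<Sum>X\<in>Pow H. fps_const (\<Prod>x\<in>X. z x) * fps_X ^ card X)"
    by (intro sum.cong refl) (simp add: prod.distrib fps_const_prod')
  finally have "fps_nth (\<Prod>a\<in>H. 1 + fps_const (z a) * fps_X) k =
      (\<Sum>X\<in>Pow H. (if card X = k then (\<Prod>x\<in>X. z x) else 0))"
    by (simp add: fps_sum_nth fps_X_power_nth eq_commute if_distrib cong: if_cong)
  also have "\<dots> = (\<Sum>X\<in>{X\<in>Pow H. card X = k}. (\<Prod>x\<in>X. z x))"
    by (simp add: sum.inter_filter[symmetric] assms)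
  also have "{X\<in>Pow H. card X = k} = {B. B \<subseteq> H \<and> card B = k}" by auto
  finally show ?thesis by (simp add: esym_def)
qed

lemma newton:
  assumes "finite H"
  shows "of_nat k * esym z H k = (\<Sum>j=1..k. (-1)^(j-1) * (\<Sum>a\<in>H. z a ^ j) * esym z H (k - j))"
proof -
  let ?F = "\<Prod>a\<in>H. 1 + fps_const (z a) * fps_X"
  have "fps_nth (fps_X * fps_deriv ?F) k = fps_nth (?F * (\<Sum>a\<in>H. Gz (z a))) k"
    by (simp add: fps_newton[OF assms])
  moreover have "fps_nth (fps_X * fps_deriv ?F) k = of_nat k * esym z H k"
    by (cases k) (simp_all add: prod_fps_nth[OF assms])
  moreover have "fps_nth (?F * (\<Sum>a\<in>H. Gz (z a))) k = (\<Sum>i=0..k. esym z H i * (\<Sum>a\<in>H. fps_nth (Gz (z a)) (k - i)))"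
    by (simp add: fps_mult_nth prod_fps_nth[OF assms] fps_sum_nth)
  moreover have "\<dots> = (\<Sum>j=0..k. esym z H (k - j) * (\<Sum>a\<in>H. fps_nth (Gz (z a)) j))"
    by (rule sum.reindex_bij_witness[where i="\<lambda>i. k - i" and j="\<lambda>i. k - i"]) auto
  moreover have "\<dots> = (\<Sum>j=1..k. esym z H (k - j) * (\<Sum>a\<in>H. fps_nth (Gz (z a)) j))"
    by (rule sum.mono_neutral_right) (auto simp: Gz_def)
  moreover have "\<dots> = (\<Sum>j=1..k. (-1)^(j-1) * (\<Sum>a\<in>H. z a ^ j) * esym z H (k - j))"
    by (intro sum.cong refl) (auto simp: Gz_def sum_distrib_left sum_distrib_right mult_ac)
  ultimately show ?thesis by simp
qed




definition addsg :: "'a::ab_group_add set \<Rightarrow> bool" where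
  "addsg K \<longleftrightarrow> 0 \<in> K \<and> (\<forall>x\<in>K. \<forall>y\<in>K. x + y \<in> K) \<and> (\<forall>x\<in>K. - x \<in> K)"

lemma addsg_mult:
  assumes "addsg K" "x \<in> K" shows "of_nat j * (x::'a::ring_1) \<in> K"
  using assms by (induction j) (auto simp: addsg_def distrib_right)

lemma CHAR_facts:
  shows "prime CHAR('a::{field,finite})" "CHAR('a) > 1"
proof -
  have "CHAR('a) > 0" by (rule finite_imp_CHAR_pos) simp
  then show "prime CHAR('a)" by (rule prime_CHAR_semidom)
  then show "CHAR('a) > 1" by (metis prime_gt_1_nat)
qed

lemma exists_char:
  obtains \<psi> :: "'a::{field,finite} \<Rightarrow> complex" where "\<And>x y. \<psi>(x+y) = \<psi> x * \<psi> y"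
    "\<And>x. cmod (\<psi> x) = 1" "\<exists>g0. \<psi> g0 \<noteq> 1"
proof -
  let ?p = "CHAR('a)"
  have pprime: "prime ?p" and p1: "?p > 1" using CHAR_facts by auto
  define Fam where "Fam = {K::'a set. addsg K \<and> K \<noteq> UNIV}"
  have "{0} \<in> Fam" unfolding Fam_def addsg_def by (auto, metis UNIV_I singletonD zero_neq_one)
  hence FamNE: "Fam \<noteq> {}" by auto
  have finFam: "finite Fam" by simp
  define M where "M = Max (card ` Fam)"
  have "M \<in> card ` Fam" unfolding M_def using finFam FamNE by (intro Max_in) auto
  then obtain K where KF: "K \<in> Fam" and KM: "card K = M" by auto
  have Kmax: "card K' \<le> card K" if K'F: "K' \<in> Fam" for K'
    using Max_ge[of "card ` Fam" "card K'"] finFam K'F KM M_def by auto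
  have Ksg: "addsg K" and Kne: "K \<noteq> UNIV" using KF Fam_def by auto
  obtain g where gK: "g \<notin> K" using Kne by auto
  have K0: "0 \<in> K" and Kadd: "\<And>x y. x \<in> K \<Longrightarrow> y \<in> K \<Longrightarrow> x + y \<in> K"
    and Kneg: "\<And>x. x \<in> K \<Longrightarrow> - x \<in> K" using Ksg unfolding addsg_def by auto
  obtain r where pr: "?p = Suc r" using p1 by (cases ?p) auto
  have ofp: "of_nat ?p * (x::'a) = 0" for x by simp
  have ofmod: "of_nat j * (x::'a) = of_nat (j mod ?p) * x" for j x
  proof -
    have "of_nat j = (of_nat (?p * (j div ?p) + j mod ?p) :: 'a)" by simp
    also have "\<dots> = of_nat (j mod ?p)" by (simp only: of_nat_add of_nat_mult of_nat_CHAR mult_zero_left add_0)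
    finally show ?thesis by simp
  qed
  define L where "L = {x::'a. \<exists>j::nat. x - of_nat j * g \<in> K}"
  have "addsg L"
  proof -
    have "0 - of_nat 0 * g \<in> K" using K0 by simp
    hence "0 \<in> L" unfolding L_def by blast
    moreover have "x + y \<in> L" if xy: "x \<in> L" "y \<in> L" for x y
    proof -
      obtain i j where "x - of_nat i * g \<in> K" "y - of_nat j * g \<in> K" using xy L_def by auto
      hence "(x - of_nat i * g) + (y - of_nat j * g) \<in> K" by (rule Kadd)
      hence "x + y - of_nat (i+j) * g \<in> K" by (simp add: algebra_simps)
      thus ?thesis using L_def by blast
    qed
    moreover have "- x \<in> L" if xL: "x \<in> L" for x
    proof -
      obtain i where "x - of_nat i * g \<in> K" using xL L_def by auto
      hence h: "- (x - of_nat i * g) \<in> K" by (rule Kneg)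
      have "of_nat (r * i) + of_nat i = (of_nat (?p * i) :: 'a)" unfolding pr by (simp add: algebra_simps)
      hence "of_nat (r * i) + of_nat i = (0 :: 'a)" by simp
      hence "of_nat ((?p - 1) * i) * g = - (of_nat i * g)" unfolding pr
        by (simp add: eq_neg_iff_add_eq_0 distrib_right[symmetric])
      then have "- x - of_nat ((?p - 1) * i) * g = - (x - of_nat i * g)" by simp
      hence "- x - of_nat ((?p - 1) * i) * g \<in> K" using h by (simp only:)
      thus ?thesis unfolding L_def by blast
    qed
    ultimately show ?thesis unfolding addsg_def by blast
  qed
  moreover have "K \<subset> L"
  proof -
    have "K \<subseteq> L" unfolding L_def by (auto intro: exI[of _ 0])
    moreover have "g - of_nat 1 * g \<in> K" using K0 by simp
    hence "g \<in> L" unfolding L_def by blast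
    ultimately show ?thesis using gK by auto
  qed
  ultimately have LU: "L = UNIV"
  proof (rule_tac ccontr)
    assume "addsg L" "K \<subset> L" "L \<noteq> UNIV"
    hence "L \<in> Fam" unfolding Fam_def by blast
    hence "card L \<le> card K" by (rule Kmax)
    moreover have "card K < card L" using \<open>K \<subset> L\<close> by (intro psubset_card_mono) auto
    ultimately show False by simp
  qed
  have uniq: "i mod ?p = j mod ?p" if ij: "x - of_nat i * g \<in> K" "x - of_nat j * g \<in> K" for x i j
  proof -
    have main: "i mod ?p = j mod ?p" if ij2: "i \<le> j" "x - of_nat i * g \<in> K" "x - of_nat j * g \<in> K" for i j
    proof (rule ccontr)
      assume nc: "\<not> i mod ?p = j mod ?p"
      have "(x - of_nat i * g) - (x - of_nat j * g) \<in> K"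
        using Kadd[OF ij2(2) Kneg[OF ij2(3)]] by simp
      hence dK: "of_nat (j - i) * g \<in> K" using ij2 by (simp add: algebra_simps of_nat_diff)
      have "\<not> ?p dvd (j - i)" using nc ij2 mod_eq_dvd_iff_nat[of i j ?p] by auto
      hence "coprime (j - i) ?p" using pprime by (simp add: coprime_commute prime_imp_coprime)
      hence gcd1: "gcd (j - i) ?p = 1" by simp
      have "j - i \<noteq> 0" using \<open>\<not> ?p dvd (j - i)\<close> by auto
      then obtain d y where d: "(j - i) * d = ?p * y + 1" using bezout_nat[of "j - i" ?p] gcd1 by auto
      have "of_nat d * (of_nat (j - i) * g) \<in> K" by (rule addsg_mult[OF Ksg dK])
      moreover have "of_nat d * (of_nat (j - i) * g) = g"
      proof -
        have "(of_nat ((j - i) * d) :: 'a) = of_nat 1"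
          using d by simp
        have "of_nat d * (of_nat (j - i) * g) = of_nat ((j - i) * d) * g" by (simp only: of_nat_mult mult_ac)
        thus ?thesis using \<open>(of_nat ((j - i) * d) :: 'a) = of_nat 1\<close> by (metis mult_1 of_nat_1)
      qed
      ultimately show False using gK by simp
    qed
    show ?thesis
    proof (cases "i \<le> j")
      case True show ?thesis using main[OF True ij] .
    next
      case False hence "j \<le> i" by simp
      from main[OF this ij(2) ij(1)] show ?thesis by simp
    qed
  qed
  define idx where "idx x = (SOME j. x - of_nat j * g \<in> K)" for x
  have idx: "x - of_nat (idx x) * g \<in> K" for x
  proof -
    have "x \<in> L" using LU by simp
    then obtain j where "x - of_nat j * g \<in> K" using L_def by auto
    thus ?thesis unfolding idx_def by (rule someI)
  qed
  define \<omega> where "\<omega> = cis (2 * pi / ?p)"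
  have \<omega>p: "\<omega> ^ ?p = 1" using p1 by (simp add: \<omega>_def DeMoivre)
  have \<omega>mod: "\<omega> ^ i = \<omega> ^ (i mod ?p)" for i
  proof -
    have "\<omega> ^ i = \<omega> ^ (?p * (i div ?p) + i mod ?p)" by simp
    also have "\<dots> = (\<omega> ^ ?p) ^ (i div ?p) * \<omega> ^ (i mod ?p)" by (simp only: power_add power_mult)
    finally show ?thesis using \<omega>p by simp
  qed
  have \<omega>cong: "\<omega> ^ i = \<omega> ^ j" if ijm: "i mod ?p = j mod ?p" for i j
    using \<omega>mod[of i] \<omega>mod[of j] ijm by simp
  define \<psi> where "\<psi> x = \<omega> ^ idx x" for x
  show ?thesis
  proof
    fix x y
    have "(x - of_nat (idx x) * g) + (y - of_nat (idx y) * g) \<in> K"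
      by (rule Kadd[OF idx idx])
    hence "(x + y) - of_nat (idx x + idx y) * g \<in> K" by (simp add: algebra_simps)
    hence "idx (x+y) mod ?p = (idx x + idx y) mod ?p" by (rule uniq[OF idx])
    hence "\<omega> ^ idx (x+y) = \<omega> ^ (idx x + idx y)" by (rule \<omega>cong)
    thus "\<psi> (x + y) = \<psi> x * \<psi> y" unfolding \<psi>_def by (simp add: power_add)
  next
    fix x show "cmod (\<psi> x) = 1" by (simp add: \<psi>_def \<omega>_def norm_power)
  next
    have "g - of_nat 1 * g \<in> K" using K0 by simp
    hence "idx g mod ?p = 1 mod ?p" by (rule uniq[OF idx])
    hence "\<omega> ^ idx g = \<omega> ^ 1" by (rule \<omega>cong)
    hence "\<psi> g = \<omega>" unfolding \<psi>_def by simp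
    moreover have "\<omega> \<noteq> 1"
    proof
      assume "\<omega> = 1"
      hence "cos (2 * pi / ?p) = 1" unfolding \<omega>_def by (metis cis.sel(1) one_complex.sel(1))
      then obtain n :: int where n: "2 * pi / ?p = real_of_int n * 2 * pi" unfolding cos_one_2pi_int by blast
      hence "(2*pi) * (1 / real ?p) = (2*pi) * real_of_int n" by (simp add: mult_ac)
      hence "1 / real ?p = n" using pi_gt_zero by (subst (asm) mult_left_cancel) auto
      moreover have "0 < 1 / real ?p" "1 / real ?p < 1" using p1 by auto
      ultimately have "0 < real_of_int n" "real_of_int n < 1" by simp_all
      hence "0 < n" "n < 1" by simp_all
      thus False by simp
    qed
    ultimately show "\<exists>g0. \<psi> g0 \<noteq> 1" by auto
  qed
qed




lemma bij_mult_nz: "(x::'a::field) \<noteq> 0 \<Longrightarrow> bij_betw (\<lambda>c. x * c) UNIV UNIV"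
  by (rule bij_betwI[where g="\<lambda>c. c / x"]) auto

lemma bij_mult_nz': "(x::'a::field) \<noteq> 0 \<Longrightarrow> bij_betw (\<lambda>c. x * c) (-{0}) (-{0})"
  by (rule bij_betwI[where g="\<lambda>c. c / x"]) auto

lemma bij_mult_nz'': "(x::'a::field) \<noteq> 0 \<Longrightarrow> bij_betw (\<lambda>c. c * x) (-{0}) (-{0})"
  by (rule bij_betwI[where g="\<lambda>c. c / x"]) auto

lemma bij_add: "bij_betw (\<lambda>c. (x::'a::ab_group_add) + c) UNIV UNIV"
  by (rule bij_betwI[where g="\<lambda>c. c - x"]) auto

locale chr =
  fixes \<psi> :: "'a::{field,finite} \<Rightarrow> complex" and H :: "'a set"
  assumes add: "\<And>x y. \<psi> (x + y) = \<psi> x * \<psi> y" and nrm: "\<And>x. cmod (\<psi> x) = 1"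
    and nt: "\<exists>g. \<psi> g \<noteq> 1" and HS: "mult_subgroup H"
begin

abbreviation "n \<equiv> card H"

lemma finH: "finite H" by simp

lemma H0: "0 \<notin> H" and H1: "1 \<in> H" and Hmul: "\<And>x y. x \<in> H \<Longrightarrow> y \<in> H \<Longrightarrow> x * y \<in> H"
  and Hinv: "\<And>x. x \<in> H \<Longrightarrow> inverse x \<in> H"
  using HS unfolding mult_subgroup_def by auto

lemma n_pos: "n > 0" using H1 by (auto simp: card_gt_0_iff)

lemma n_le: "n \<le> card (UNIV::'a set)" by (rule card_mono) auto

lemma q_ge: "card (UNIV::'a set) \<ge> 2"
proof -
  have "card {0::'a, 1} \<le> card (UNIV::'a set)" by (rule card_mono) auto
  moreover have "card {0::'a, 1} = 2" by simp
  ultimately show ?thesis by simp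
qed

lemma bij_H: "h \<in> H \<Longrightarrow> bij_betw (\<lambda>a. h * a) H H"
proof (rule bij_betwI[where g="\<lambda>a. inverse h * a"])
  assume h: "h \<in> H"
  hence h0: "h \<noteq> 0" using H0 by auto
  show "(\<lambda>a. h * a) \<in> H \<rightarrow> H" using Hmul h by auto
  show "(\<lambda>a. inverse h * a) \<in> H \<rightarrow> H" using Hmul Hinv h by auto
  show "inverse h * (h * x) = x" for x using h0 by (simp add: mult.assoc[symmetric])
  show "h * (inverse h * y) = y" for y using h0 by (simp add: mult.assoc[symmetric])
qed

lemma psi0: "\<psi> 0 = 1"
proof -
  have "\<psi> 0 = \<psi> 0 * \<psi> 0" using add[of 0 0] by simp
  moreover have "\<psi> 0 \<noteq> 0" using nrm[of 0] by auto
  ultimately show ?thesis by (metis mult_cancel_left2)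
qed

lemma psi_neg: "\<psi> (- x) = cnj (\<psi> x)"
proof -
  have "\<psi> x * \<psi> (- x) = 1" using add[of x "-x"] psi0 by simp
  moreover have "\<psi> x * cnj (\<psi> x) = 1"
    using complex_norm_square[of "\<psi> x"] nrm[of x] by simp
  moreover have "\<psi> x \<noteq> 0" using nrm[of x] by auto
  ultimately show ?thesis by (metis mult_left_cancel)
qed

lemma psi_sum: "\<psi> (\<Sum>a\<in>B. f a) = (\<Prod>a\<in>B. \<psi> (f a))"
  by (induction B rule: infinite_finite_induct) (auto simp: psi0 add)

lemma psi_pow: "\<psi> x ^ j = \<psi> (of_nat j * x)"
  by (induction j) (auto simp: psi0 add distrib_right)

lemma orth: "(\<Sum>c\<in>UNIV. \<psi> (c * x)) = (if x = 0 then of_nat (card (UNIV::'a set)) else 0)"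
proof (cases "x = 0")
  case True then show ?thesis by (simp add: psi0)
next
  case False
  obtain g where g: "\<psi> g \<noteq> 1" using nt by auto
  define T where "T = (\<Sum>c\<in>UNIV. \<psi> c)"
  have "(\<Sum>c\<in>UNIV. \<psi> (c * x)) = T"
    unfolding T_def using sum.reindex_bij_betw[OF bij_mult_nz[OF False], of \<psi>] by (simp add: mult.commute)
  moreover have "\<psi> g * T = T"
  proof -
    have "\<psi> g * T = (\<Sum>c\<in>UNIV. \<psi> (g + c))" unfolding T_def by (simp add: add sum_distrib_left)
    also have "\<dots> = T" unfolding T_def by (rule sum.reindex_bij_betw[OF bij_add])
    finally show ?thesis .
  qed
  hence "(\<psi> g - 1) * T = 0" by (simp add: algebra_simps)
  hence "T = 0" using g by simp
  ultimately show ?thesis using False by simp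
qed

definition S :: "'a \<Rightarrow> complex" where "S d = (\<Sum>a\<in>H. \<psi> (d * a))"

lemma S_inv: "h \<in> H \<Longrightarrow> S (d * h) = S d"
  unfolding S_def using sum.reindex_bij_betw[OF bij_H, of h "\<lambda>a. \<psi> (d * a)"]
  by (simp add: mult.assoc)

lemma S0: "S 0 = of_nat n" by (simp add: S_def psi0)

lemma parseval: "(\<Sum>c\<in>UNIV. (cmod (S c))^2) = real (card (UNIV::'a set)) * real n"
proof -
  have "complex_of_real (\<Sum>c\<in>UNIV. (cmod (S c))^2) = (\<Sum>c\<in>UNIV. S c * cnj (S c))"
    by (simp only: of_real_sum complex_norm_square)
  also have "\<dots> = (\<Sum>c\<in>UNIV. \<Sum>a\<in>H. \<Sum>a'\<in>H. \<psi> (c * (a - a')))"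
  proof (rule sum.cong[OF refl])
    fix c
    have cj: "cnj (S c) = (\<Sum>a'\<in>H. \<psi> (- (c * a')))" unfolding S_def cnj_sum by (simp only: psi_neg)
    have "S c * cnj (S c) = (\<Sum>a\<in>H. \<psi> (c * a)) * (\<Sum>a'\<in>H. \<psi> (- (c * a')))"
      unfolding cj by (simp only: S_def)
    also have "\<dots> = (\<Sum>a\<in>H. \<Sum>a'\<in>H. \<psi> (c * a) * \<psi> (- (c * a')))"
      by (rule sum_product)
    also have "\<dots> = (\<Sum>a\<in>H. \<Sum>a'\<in>H. \<psi> (c * (a - a')))"
    proof (intro sum.cong refl)
      fix a a' show "\<psi> (c * a) * \<psi> (- (c * a')) = \<psi> (c * (a - a'))"
      proof -
        have "c * (a - a') = c * a + - (c * a')" by (simp add: algebra_simps)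
        thus ?thesis by (simp only: add)
      qed
    qed
    finally show "S c * cnj (S c) = (\<Sum>a\<in>H. \<Sum>a'\<in>H. \<psi> (c * (a - a')))" .
  qed
  also have "\<dots> = (\<Sum>a\<in>H. \<Sum>c\<in>UNIV. \<Sum>a'\<in>H. \<psi> (c * (a - a')))"
    by (rule sum.swap)
  also have "\<dots> = (\<Sum>a\<in>H. \<Sum>a'\<in>H. \<Sum>c\<in>UNIV. \<psi> (c * (a - a')))"
    by (rule sum.cong[OF refl], rule sum.swap)
  also have "\<dots> = (\<Sum>a\<in>H. \<Sum>a'\<in>H. if a = a' then of_nat (card (UNIV::'a set)) else 0)"
    by (simp add: orth)
  also have "\<dots> = of_nat (card (UNIV::'a set)) * of_nat n" by simp
  also have "\<dots> = complex_of_real (real (card (UNIV::'a set)) * real n)" by simp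
  finally show ?thesis by (simp only: of_real_eq_iff)
qed

lemma parseval_nz: "(\<Sum>c\<in>-{0}. (cmod (S c))^2) \<le> real (card (UNIV::'a set)) * real n"
proof -
  have "(\<Sum>c\<in>-{0}. (cmod (S c))^2) \<le> (\<Sum>c\<in>UNIV. (cmod (S c))^2)"
    by (rule sum_mono2) auto
  thus ?thesis using parseval by simp
qed

lemma S_bound: assumes "d \<noteq> 0" shows "cmod (S d) \<le> sqrt (real (card (UNIV::'a set)))"
proof -
  have "real n * (cmod (S d))^2 = (\<Sum>h\<in>H. (cmod (S (d * h)))^2)" by (simp add: S_inv)
  also have "\<dots> = (\<Sum>c\<in>(\<lambda>h. d * h) ` H. (cmod (S c))^2)"
    by (rule sum.reindex[symmetric, unfolded comp_def]) (simp add: assms inj_on_def)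
  also have "\<dots> \<le> (\<Sum>c\<in>-{0}. (cmod (S c))^2)"
    by (rule sum_mono2) (use assms H0 in auto)
  also have "\<dots> \<le> real (card (UNIV::'a set)) * real n" by (rule parseval_nz)
  also have "\<dots> = real n * real (card (UNIV::'a set))" by (rule mult.commute)
  finally have le: "real n * (cmod (S d))^2 \<le> real n * real (card (UNIV::'a set))" .
  have "(cmod (S d))^2 \<le> real (card (UNIV::'a set))" by (rule mult_left_le_imp_le[OF le]) (simp add: n_pos)
  thus ?thesis by (rule real_le_rsqrt)
qed

end



context
  fixes A :: real
  assumes A0: "A \<ge> 0"
begin

definition TT :: "nat \<Rightarrow> real" where "TT k = (A + real k) gchoose k"

lemma TT_0: "TT 0 = 1" by (simp add: TT_def)

lemma TT_Suc: "real (Suc k) * TT (Suc k) = (A + real (Suc k)) * TT k"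
proof -
  have "real (Suc k) * TT (Suc k) = (A + real (Suc k)) * ((A + real (Suc k) - 1) gchoose k)"
    unfolding TT_def by (rule gbinomial_absorption)
  also have "A + real (Suc k) - 1 = A + real k" by simp
  finally show ?thesis by (simp add: TT_def)
qed

lemma TT_nonneg: "TT k \<ge> 0"
proof (induction k)
  case 0 then show ?case by (simp add: TT_0)
next
  case (Suc k)
  have "real (Suc k) * TT (Suc k) \<ge> 0" unfolding TT_Suc using Suc A0 by simp
  thus ?case by (simp add: zero_le_mult_iff)
qed

lemma TT_mono_Suc: "TT k \<le> TT (Suc k)"
proof -
  have "real (Suc k) * TT k \<le> (A + real (Suc k)) * TT k"
    using A0 TT_nonneg[of k] by (intro mult_right_mono) auto
  also have "\<dots> = real (Suc k) * TT (Suc k)" by (rule TT_Suc[symmetric])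
  finally show ?thesis by (rule mult_left_le_imp_le) simp
qed

lemma TT_mono: "i \<le> j \<Longrightarrow> TT i \<le> TT j"
  by (rule lift_Suc_mono_le[of TT]) (rule TT_mono_Suc)

lemma TT_sum: "real k * TT k = (A + 1) * (\<Sum>i\<in>{0..<k}. TT i)"
proof (induction k)
  case 0 then show ?case by simp
next
  case (Suc k)
  have "real (Suc k) * TT (Suc k) = (A + 1) * TT k + real k * TT k"
    unfolding TT_Suc by (simp add: algebra_simps)
  also have "\<dots> = (A + 1) * (\<Sum>i\<in>{0..<Suc k}. TT i)"
    unfolding Suc by (simp add: algebra_simps)
  finally show ?case .
qed

lemma block:
  assumes p: "p > (0::nat)"
  shows "real p * (\<Sum>i\<in>{0..<k}. if p dvd (k - i) then TT i else 0) \<le> (\<Sum>i\<in>{0..<k}. TT i)"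
proof (induction k rule: less_induct)
  case (less k)
  show ?case
  proof (cases "k < p")
    case True
    have "(\<Sum>i\<in>{0..<k}. if p dvd (k - i) then TT i else 0) = 0"
    proof (intro sum.neutral ballI)
      fix i assume "i \<in> {0..<k}"
      hence "0 < k - i" "k - i < p" using True by auto
      hence "\<not> p dvd (k - i)" using nat_dvd_not_less by blast
      thus "(if p dvd (k - i) then TT i else 0) = 0" by simp
    qed
    thus ?thesis by (simp add: sum_nonneg TT_nonneg)
  next
    case False
    define k' where "k' = k - p"
    have kk: "k = k' + p" using False k'_def by simp
    have U: "(\<Sum>i\<in>{0..<k}. if p dvd (k - i) then TT i else 0)
        = (\<Sum>i\<in>{0..<k'}. if p dvd (k' - i) then TT i else 0) + TT k'"
    proof -
      have "(\<Sum>i\<in>{0..<k}. if p dvd (k - i) then TT i else 0)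
          = (\<Sum>i\<in>{0..<k'}. if p dvd (k - i) then TT i else 0) + (\<Sum>i\<in>{k'..<k}. if p dvd (k - i) then TT i else 0)"
        using kk by (simp add: sum.atLeastLessThan_concat)
      also have "(\<Sum>i\<in>{0..<k'}. if p dvd (k - i) then TT i else 0) = (\<Sum>i\<in>{0..<k'}. if p dvd (k' - i) then TT i else 0)"
      proof (intro sum.cong refl)
        fix i assume "i \<in> {0..<k'}"
        hence "k - i = (k' - i) + p" using kk by auto
        thus "(if p dvd (k - i) then TT i else 0) = (if p dvd (k' - i) then TT i else 0)" by simp
      qed
      also have "(\<Sum>i\<in>{k'..<k}. if p dvd (k - i) then TT i else 0) = (\<Sum>i\<in>{k'..<k}. if i = k' then TT i else 0)"
      proof (intro sum.cong refl)
        fix i assume i: "i \<in> {k'..<k}"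
        have "p dvd (k - i) \<longleftrightarrow> i = k'"
        proof
          assume d: "p dvd (k - i)"
          have "0 < k - i" "k - i \<le> p" using i kk by auto
          hence "k - i = p" using d by (meson dvd_imp_le le_antisym)
          thus "i = k'" using kk i by auto
        next
          assume "i = k'" thus "p dvd (k - i)" using kk by simp
        qed
        thus "(if p dvd (k - i) then TT i else 0) = (if i = k' then TT i else 0)" by simp
      qed
      also have "\<dots> = TT k'" using kk p by simp
      finally show ?thesis .
    qed
    have V: "(\<Sum>i\<in>{0..<k}. TT i) \<ge> (\<Sum>i\<in>{0..<k'}. TT i) + real p * TT k'"
    proof -
      have "(\<Sum>i\<in>{0..<k}. TT i) = (\<Sum>i\<in>{0..<k'}. TT i) + (\<Sum>i\<in>{k'..<k}. TT i)"
        using kk by (simp add: sum.atLeastLessThan_concat)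
      moreover have "real (card {k'..<k}) * TT k' \<le> (\<Sum>i\<in>{k'..<k}. TT i)"
        by (rule sum_bounded_below) (auto intro: TT_mono)
      moreover have "card {k'..<k} = p" using kk by simp
      ultimately show ?thesis by simp
    qed
    have IH: "real p * (\<Sum>i\<in>{0..<k'}. if p dvd (k' - i) then TT i else 0) \<le> (\<Sum>i\<in>{0..<k'}. TT i)"
      using less kk p by simp
    show ?thesis unfolding U using IH V by (simp add: distrib_left)
  qed
qed

lemma TT_rec:
  fixes nn sq alpha :: real and p :: nat
  assumes p: "p > 0" and sq: "sq \<ge> 0" and Aeq: "A = sq + alpha" and nn: "nn \<le> real p * alpha" and nn0: "nn \<ge> 0"
    and k: "k > 0"
  shows "(\<Sum>j=1..k. (if p dvd j then nn else sq) * TT (k - j)) \<le> real k * TT k"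
proof -
  have "(\<Sum>j=1..k. (if p dvd j then nn else sq) * TT (k - j))
      = (\<Sum>i\<in>{0..<k}. (if p dvd (k - i) then nn else sq) * TT i)"
    by (rule sum.reindex_bij_witness[where i="\<lambda>i. k - i" and j="\<lambda>j. k - j"]) auto
  also have "\<dots> \<le> (\<Sum>i\<in>{0..<k}. sq * TT i + nn * (if p dvd (k - i) then TT i else 0))"
    by (intro sum_mono) (use sq nn0 TT_nonneg in auto)
  also have "\<dots> = sq * (\<Sum>i\<in>{0..<k}. TT i) + (nn / real p) * (real p * (\<Sum>i\<in>{0..<k}. if p dvd (k - i) then TT i else 0))"
    using p by (simp add: sum.distrib sum_distrib_left)
  also have "\<dots> \<le> sq * (\<Sum>i\<in>{0..<k}. TT i) + (nn / real p) * (\<Sum>i\<in>{0..<k}. TT i)"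
    using block[OF p, of k] nn0 p by (intro add_left_mono mult_left_mono) auto
  also have "\<dots> \<le> sq * (\<Sum>i\<in>{0..<k}. TT i) + (alpha + 1) * (\<Sum>i\<in>{0..<k}. TT i)"
  proof -
    have "nn / real p \<le> alpha" using nn p by (simp add: divide_le_eq mult.commute)
    thus ?thesis by (intro add_left_mono mult_right_mono) (auto simp: sum_nonneg TT_nonneg)
  qed
  also have "\<dots> = (A + 1) * (\<Sum>i\<in>{0..<k}. TT i)" using Aeq by (simp add: algebra_simps)
  also have "\<dots> = real k * TT k" by (rule TT_sum[symmetric])
  finally show ?thesis .
qed

end



fun Kq :: "nat \<Rightarrow> nat \<Rightarrow> nat \<Rightarrow> complex" where
  "Kq p nn k = (if k = 0 then 1 else
     (\<Sum>j\<in>{1..k}. if p dvd j then (-1)^(j-1) * of_nat nn * Kq p nn (k - j) else 0) / of_nat k)"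

declare Kq.simps[simp del]

lemma Kq_0: "Kq p nn 0 = 1" by (simp add: Kq.simps)

lemma Kq_rec: "k > 0 \<Longrightarrow> of_nat k * Kq p nn k =
   (\<Sum>j\<in>{1..k}. if p dvd j then (-1)^(j-1) * of_nat nn * Kq p nn (k - j) else 0)"
  by (subst Kq.simps) simp

context chr begin

definition E :: "'a \<Rightarrow> nat \<Rightarrow> complex" where "E c k = esym (\<lambda>a. \<psi> (c * a)) H k"

lemma E_alt: "E c k = (\<Sum>B | B \<subseteq> H \<and> card B = k. \<psi> (c * (\<Sum>a\<in>B. a)))"
  unfolding E_def esym_def by (simp add: sum_distrib_left psi_sum)

lemma finSub: "finite {B. B \<subseteq> H \<and> card B = k}" by simp

lemma count: "(\<Sum>c\<in>UNIV. \<psi> (- (c * b)) * E c k) =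
   of_nat (card (UNIV::'a set)) * of_nat (subset_sum_count H k b)"
proof -
  let ?Sub = "{B. B \<subseteq> H \<and> card B = k}"
  have "(\<Sum>c\<in>UNIV. \<psi> (- (c * b)) * E c k) = (\<Sum>c\<in>UNIV. \<Sum>B\<in>?Sub. \<psi> (c * ((\<Sum>a\<in>B. a) - b)))"
  proof (intro sum.cong refl)
    fix c
    have "\<psi> (- (c * b)) * E c k = (\<Sum>B\<in>?Sub. \<psi> (- (c * b)) * \<psi> (c * (\<Sum>a\<in>B. a)))"
      unfolding E_alt by (simp add: sum_distrib_left)
    also have "\<dots> = (\<Sum>B\<in>?Sub. \<psi> (c * ((\<Sum>a\<in>B. a) - b)))"
    proof (intro sum.cong refl)
      fix B
      have "c * ((\<Sum>a\<in>B. a) - b) = - (c * b) + c * (\<Sum>a\<in>B. a)" by (simp add: algebra_simps)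
      thus "\<psi> (- (c * b)) * \<psi> (c * (\<Sum>a\<in>B. a)) = \<psi> (c * ((\<Sum>a\<in>B. a) - b))" by (simp only: add)
    qed
    finally show "\<psi> (- (c * b)) * E c k = (\<Sum>B\<in>?Sub. \<psi> (c * ((\<Sum>a\<in>B. a) - b)))" .
  qed
  also have "\<dots> = (\<Sum>B\<in>?Sub. \<Sum>c\<in>UNIV. \<psi> (c * ((\<Sum>a\<in>B. a) - b)))" by (rule sum.swap)
  also have "\<dots> = (\<Sum>B\<in>?Sub. if (\<Sum>a\<in>B. a) = b then of_nat (card (UNIV::'a set)) else 0)"
    by (intro sum.cong refl) (simp add: orth)
  also have "\<dots> = (\<Sum>B\<in>{B \<in> ?Sub. (\<Sum>a\<in>B. a) = b}. of_nat (card (UNIV::'a set)))"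
    by (rule sum.inter_filter[symmetric]) simp
  also have "\<dots> = of_nat (card (UNIV::'a set)) * of_nat (card {B \<in> ?Sub. (\<Sum>a\<in>B. a) = b})"
    by simp
  also have "{B \<in> ?Sub. (\<Sum>a\<in>B. a) = b} = {S. S \<subseteq> H \<and> card S = k \<and> (\<Sum>a\<in>S. a) = b}" by auto
  finally show ?thesis by (simp add: subset_sum_count_def)
qed

lemma E_0k: "E 0 k = of_nat (n choose k)"
  unfolding E_def esym_def by (simp add: psi0 n_subsets)

lemma E_c0: "E c 0 = 1"
proof -
  have "{B. B \<subseteq> H \<and> card B = 0} = {{}}" using finite_subset[OF _ finH] by auto
  thus ?thesis unfolding E_def esym_def by simp
qed

lemma E_inv: assumes h: "h \<in> H" shows "E (c * h) k = E c k"
proof -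
  have "(\<Prod>a\<in>H. 1 + fps_const (\<psi> (c * h * a)) * fps_X) = (\<Prod>a\<in>H. 1 + fps_const (\<psi> (c * a)) * fps_X)"
    using prod.reindex_bij_betw[OF bij_H[OF h], of "\<lambda>a. 1 + fps_const (\<psi> (c * a)) * fps_X"]
    by (simp add: mult.assoc)
  thus ?thesis unfolding E_def prod_fps_nth[OF finH, symmetric] by simp
qed

lemma E_newton: "of_nat k * E c k = (\<Sum>j=1..k. (-1)^(j-1) * S (of_nat j * c) * E c (k - j))"
proof -
  have "of_nat k * E c k = (\<Sum>j=1..k. (-1)^(j-1) * (\<Sum>a\<in>H. \<psi> (c * a) ^ j) * E c (k - j))"
    unfolding E_def by (rule newton[OF finH])
  also have "\<dots> = (\<Sum>j=1..k. (-1)^(j-1) * S (of_nat j * c) * E c (k - j))"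
    by (intro sum.cong refl) (simp add: S_def psi_pow mult.assoc)
  finally show ?thesis .
qed

definition K :: "nat \<Rightarrow> complex" where "K k = Kq CHAR('a) n k"
definition f :: "'a \<Rightarrow> nat \<Rightarrow> complex" where "f c k = E c k - K k"

lemma f_inv: "h \<in> H \<Longrightarrow> f (c * h) k = f c k" by (simp add: f_def E_inv)

lemma f_0: "f c 0 = 0" by (simp add: f_def E_c0 K_def Kq_0)

lemma S_char: assumes "CHAR('a) dvd j" shows "S (of_nat j * c) = of_nat n"
proof -
  have "(of_nat j::'a) = 0" using assms by (simp add: of_nat_eq_0_iff_char_dvd)
  thus ?thesis by (simp add: S0)
qed

lemma f_rec:
  assumes k: "k > 0"
  shows "of_nat k * f c k = (\<Sum>j=1..k. (-1)^(j-1) *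
     (if CHAR('a) dvd j then of_nat n * f c (k - j) else S (of_nat j * c) * E c (k - j)))"
proof -
  have "of_nat k * f c k = of_nat k * E c k - of_nat k * K k" by (simp add: f_def algebra_simps)
  also have "\<dots> = (\<Sum>j=1..k. (-1)^(j-1) * S (of_nat j * c) * E c (k - j))
      - (\<Sum>j\<in>{1..k}. if CHAR('a) dvd j then (-1)^(j-1) * of_nat n * K (k - j) else 0)"
    unfolding E_newton K_def using Kq_rec[OF k] by simp
  also have "\<dots> = (\<Sum>j=1..k. (-1)^(j-1) * S (of_nat j * c) * E c (k - j)
      - (if CHAR('a) dvd j then (-1)^(j-1) * of_nat n * K (k - j) else 0))"
    by (rule sum_subtractf[symmetric])
  also have "\<dots> = (\<Sum>j=1..k. (-1)^(j-1) *
     (if CHAR('a) dvd j then of_nat n * f c (k - j) else S (of_nat j * c) * E c (k - j)))"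
  proof (intro sum.cong refl)
    fix j
    show "(-1)^(j-1) * S (of_nat j * c) * E c (k - j)
      - (if CHAR('a) dvd j then (-1)^(j-1) * of_nat n * K (k - j) else 0) = (-1)^(j-1) *
     (if CHAR('a) dvd j then of_nat n * f c (k - j) else S (of_nat j * c) * E c (k - j))"
    proof (cases "CHAR('a) dvd j")
      case True
      then show ?thesis using S_char[OF True, of c] by (simp add: f_def algebra_simps)
    qed simp
  qed
  finally show ?thesis .
qed

end



context chr begin

definition Lam :: "('a \<Rightarrow> complex) \<Rightarrow> real" where
  "Lam g = L2_set (\<lambda>c. cmod (g c)) (-{0})"

lemma Lam_nonneg: "Lam g \<ge> 0" unfolding Lam_def by (rule L2_set_nonneg)

lemma Lam_add: "Lam (\<lambda>c. g c + h c) \<le> Lam g + Lam h"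
proof -
  have "Lam (\<lambda>c. g c + h c) \<le> L2_set (\<lambda>c. cmod (g c) + cmod (h c)) (-{0})"
    unfolding Lam_def by (rule L2_set_mono) (auto simp: norm_triangle_ineq)
  also have "\<dots> \<le> Lam g + Lam h" unfolding Lam_def by (rule L2_set_triangle_ineq)
  finally show ?thesis .
qed

lemma Lam_sum: "Lam (\<lambda>c. \<Sum>j\<in>J. g j c) \<le> (\<Sum>j\<in>J. Lam (g j))"
proof (induction J rule: infinite_finite_induct)
  case (infinite J) then show ?case by (simp add: Lam_def L2_set_def)
next
  case empty then show ?case by (simp add: Lam_def L2_set_def)
next
  case (insert x F)
  have "Lam (\<lambda>c. \<Sum>j\<in>insert x F. g j c) = Lam (\<lambda>c. g x c + (\<Sum>j\<in>F. g j c))"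
    using insert by simp
  also have "\<dots> \<le> Lam (g x) + Lam (\<lambda>c. \<Sum>j\<in>F. g j c)" by (rule Lam_add)
  also have "\<dots> \<le> Lam (g x) + (\<Sum>j\<in>F. Lam (g j))" using insert by simp
  finally show ?case using insert by simp
qed

lemma Lam_scale: "Lam (\<lambda>c. a * g c) = cmod a * Lam g"
  unfolding Lam_def by (simp add: L2_set_right_distrib norm_mult)

lemma Lam_mono: assumes "\<And>c. c \<noteq> 0 \<Longrightarrow> cmod (g c) \<le> B * cmod (h c)" "B \<ge> 0"
  shows "Lam g \<le> B * Lam h"
proof -
  have "Lam g \<le> L2_set (\<lambda>c. B * cmod (h c)) (-{0})"
    unfolding Lam_def by (rule L2_set_mono) (use assms in auto)
  also have "\<dots> = B * Lam h" unfolding Lam_def by (rule L2_set_right_distrib[symmetric]) (rule assms(2))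
  finally show ?thesis .
qed

lemma Lam_S: assumes x: "x \<noteq> 0"
  shows "Lam (\<lambda>c. S (x * c)) \<le> sqrt (real (card (UNIV::'a set)) * real n)"
proof -
  have "Lam (\<lambda>c. S (x * c)) = sqrt (\<Sum>c\<in>-{0}. (cmod (S (x * c)))^2)"
    unfolding Lam_def L2_set_def by simp
  also have "(\<Sum>c\<in>-{0}. (cmod (S (x * c)))^2) = (\<Sum>c\<in>-{0}. (cmod (S c))^2)"
    by (rule sum.reindex_bij_betw[OF bij_mult_nz'[OF x], of "\<lambda>c. (cmod (S c))^2"])
  finally show ?thesis using parseval_nz by simp
qed

lemma Lam_CS: "cmod (\<Sum>c\<in>-{0}. g c * h c) \<le> Lam g * Lam h"
proof -
  have "cmod (\<Sum>c\<in>-{0}. g c * h c) \<le> (\<Sum>c\<in>-{0}. cmod (g c * h c))" by (rule norm_sum)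
  also have "\<dots> = (\<Sum>c\<in>-{0}. \<bar>cmod (g c)\<bar> * \<bar>cmod (h c)\<bar>)" by (simp add: norm_mult)
  also have "\<dots> \<le> Lam g * Lam h" unfolding Lam_def by (rule L2_set_mult_ineq)
  finally show ?thesis .
qed


definition w :: "nat \<Rightarrow> real" where "w j = (if CHAR('a) dvd j then real n else sqrt (real (card (UNIV::'a set))))"

definition G :: "nat \<Rightarrow> real" where "G k = cmod (K k) + Lam (\<lambda>c. f c k) / sqrt (real n)"

lemma sqn_pos: "sqrt (real n) > 0" using n_pos by simp

lemma G_step:
  assumes k: "k > 0"
  shows "real k * G k \<le> (\<Sum>j=1..k. w j * G (k - j))"
proof -
  let ?p = "CHAR('a)"
  let ?sn = "sqrt (real n)"
  have K1: "real k * cmod (K k) \<le> (\<Sum>j=1..k. if ?p dvd j then real n * cmod (K (k - j)) else 0)"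
  proof -
    have "real k * cmod (K k) = cmod (of_nat k * K k)" by (simp add: norm_mult)
    also have "\<dots> = cmod (\<Sum>j\<in>{1..k}. if ?p dvd j then (-1)^(j-1) * of_nat n * K (k - j) else 0)"
      unfolding K_def using Kq_rec[OF k] by simp
    also have "\<dots> \<le> (\<Sum>j\<in>{1..k}. cmod (if ?p dvd j then (-1)^(j-1) * of_nat n * K (k - j) else 0))"
      by (rule norm_sum)
    also have "\<dots> = (\<Sum>j=1..k. if ?p dvd j then real n * cmod (K (k - j)) else 0)"
      by (intro sum.cong refl) (simp add: norm_mult norm_power)
    finally show ?thesis .
  qed
  define tm where "tm j c = (-1)^(j-1) *
     (if ?p dvd j then of_nat n * f c (k - j) else S (of_nat j * c) * E c (k - j))" for j c
  have f1: "real k * Lam (\<lambda>c. f c k) \<le> (\<Sum>j=1..k. Lam (tm j))"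
  proof -
    have "real k * Lam (\<lambda>c. f c k) = Lam (\<lambda>c. of_nat k * f c k)" by (simp add: Lam_scale)
    also have "\<dots> = Lam (\<lambda>c. \<Sum>j=1..k. tm j c)" unfolding f_rec[OF k] tm_def by simp
    also have "\<dots> \<le> (\<Sum>j=1..k. Lam (tm j))" by (rule Lam_sum)
    finally show ?thesis .
  qed
  have tmb: "Lam (tm j) \<le> (if ?p dvd j then real n * Lam (\<lambda>c. f c (k - j))
      else cmod (K (k - j)) * sqrt (real (card (UNIV::'a set)) * real n) + sqrt (real (card (UNIV::'a set))) * Lam (\<lambda>c. f c (k - j)))" for j
  proof -
    have "Lam (tm j) = Lam (\<lambda>c. (if ?p dvd j then of_nat n * f c (k - j) else S (of_nat j * c) * E c (k - j)))"
      unfolding tm_def Lam_scale by (simp add: norm_power)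
    also have "\<dots> \<le> (if ?p dvd j then real n * Lam (\<lambda>c. f c (k - j))
      else cmod (K (k - j)) * sqrt (real (card (UNIV::'a set)) * real n) + sqrt (real (card (UNIV::'a set))) * Lam (\<lambda>c. f c (k - j)))"
    proof (cases "?p dvd j")
      case True then show ?thesis by (simp add: Lam_scale)
    next
      case False
      have jnz: "(of_nat j :: 'a) \<noteq> 0" using False by (simp add: of_nat_eq_0_iff_char_dvd)
      have "Lam (\<lambda>c. S (of_nat j * c) * E c (k - j))
          = Lam (\<lambda>c. K (k - j) * S (of_nat j * c) + S (of_nat j * c) * f c (k - j))"
        by (simp add: f_def algebra_simps)
      also have "\<dots> \<le> Lam (\<lambda>c. K (k - j) * S (of_nat j * c)) + Lam (\<lambda>c. S (of_nat j * c) * f c (k - j))"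
        by (rule Lam_add)
      also have "Lam (\<lambda>c. K (k - j) * S (of_nat j * c)) \<le> cmod (K (k - j)) * sqrt (real (card (UNIV::'a set)) * real n)"
        unfolding Lam_scale by (intro mult_left_mono Lam_S jnz) simp
      also have "Lam (\<lambda>c. S (of_nat j * c) * f c (k - j)) \<le> sqrt (real (card (UNIV::'a set))) * Lam (\<lambda>c. f c (k - j))"
      proof (rule Lam_mono)
        fix c :: 'a assume "c \<noteq> 0"
        hence "of_nat j * c \<noteq> 0" using jnz by simp
        hence "cmod (S (of_nat j * c)) \<le> sqrt (real (card (UNIV::'a set)))" by (rule S_bound)
        thus "cmod (S (of_nat j * c) * f c (k - j)) \<le> sqrt (real (card (UNIV::'a set))) * cmod (f c (k - j))"
          by (simp add: norm_mult mult_right_mono)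
      qed simp
      finally show ?thesis using False by simp
    qed
    finally show ?thesis .
  qed
  have "real k * G k = real k * cmod (K k) + (real k * Lam (\<lambda>c. f c k)) / ?sn"
    unfolding G_def by (simp add: algebra_simps)
  also have "\<dots> \<le> (\<Sum>j=1..k. if ?p dvd j then real n * cmod (K (k - j)) else 0) + (\<Sum>j=1..k. Lam (tm j)) / ?sn"
    using K1 f1 sqn_pos by (intro add_mono divide_right_mono) auto
  also have "\<dots> = (\<Sum>j=1..k. (if ?p dvd j then real n * cmod (K (k - j)) else 0) + Lam (tm j) / ?sn)"
    by (simp add: sum.distrib sum_divide_distrib)
  also have "\<dots> \<le> (\<Sum>j=1..k. w j * G (k - j))"
  proof (rule sum_mono)
    fix j
    show "(if ?p dvd j then real n * cmod (K (k - j)) else 0) + Lam (tm j) / ?sn \<le> w j * G (k - j)"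
    proof (cases "?p dvd j")
      case True
      have "Lam (tm j) / ?sn \<le> real n * Lam (\<lambda>c. f c (k - j)) / ?sn"
        using tmb[of j] True sqn_pos by (intro divide_right_mono) auto
      thus ?thesis using True by (simp add: w_def G_def algebra_simps)
    next
      case False
      have "Lam (tm j) / ?sn \<le> (cmod (K (k - j)) * sqrt (real (card (UNIV::'a set)) * real n) + sqrt (real (card (UNIV::'a set))) * Lam (\<lambda>c. f c (k - j))) / ?sn"
        using tmb[of j] False sqn_pos by (intro divide_right_mono) auto
      also have "\<dots> = sqrt (real (card (UNIV::'a set))) * G (k - j)"
      proof -
        have sn0: "sqrt (real n) \<noteq> 0" using sqn_pos by linarith
        show ?thesis unfolding G_def real_sqrt_mult using sn0 by (simp add: field_simps)
      qed
      finally show ?thesis using False by (simp add: w_def)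
    qed
  qed
  finally show ?thesis .
qed

lemma G_bound:
  assumes Tnn: "\<And>k. T k \<ge> 0" and T0: "T 0 \<ge> 1"
    and Trec: "\<And>k. k > 0 \<Longrightarrow> (\<Sum>j=1..k. w j * T (k - j)) \<le> real k * T k"
  shows "G k \<le> T k"
proof (induction k rule: less_induct)
  case (less k)
  show ?case
  proof (cases "k = 0")
    case True
    have "G 0 = 1" by (simp add: G_def K_def Kq_0 f_0 Lam_def L2_set_def)
    thus ?thesis using True T0 by simp
  next
    case False
    hence k: "k > 0" by simp
    have "real k * G k \<le> (\<Sum>j=1..k. w j * G (k - j))" by (rule G_step[OF k])
    also have "\<dots> \<le> (\<Sum>j=1..k. w j * T (k - j))"
    proof (rule sum_mono)
      fix j assume "j \<in> {1..k}"
      hence "G (k - j) \<le> T (k - j)" using less by simp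
      moreover have "w j \<ge> 0" by (simp add: w_def)
      ultimately show "w j * G (k - j) \<le> w j * T (k - j)" by (rule mult_left_mono)
    qed
    also have "\<dots> \<le> real k * T k" by (rule Trec[OF k])
    finally show ?thesis using k by simp
  qed
qed

end



context chr begin

lemma sum_split0: "(\<Sum>c\<in>UNIV. g c) = g 0 + (\<Sum>c\<in>-{0::'a}. g c)"
proof -
  have "(\<Sum>c\<in>UNIV. g c) = g 0 + (\<Sum>c\<in>UNIV - {0::'a}. g c)" by (rule sum.remove) auto
  thus ?thesis by (simp add: Compl_eq_Diff_UNIV)
qed

lemma card_nz: "card (-{0::'a}) = card (UNIV::'a set) - 1"
  by (simp add: Compl_eq_Diff_UNIV card_Diff_singleton)

lemma sq_ge1: "sqrt (real (card (UNIV::'a set))) \<ge> 1" using q_ge by simp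

lemma final_nz:
  assumes b: "b \<noteq> 0"
  shows "\<bar>real (subset_sum_count H k b) - real (n choose k) / real (card (UNIV::'a set))\<bar>
     \<le> G k / sqrt (real (card (UNIV::'a set)))"
proof -
  define q where "q = card (UNIV::'a set)"
  define M where "M = subset_sum_count H k b"
  define X where "X = (\<Sum>c\<in>-{0}. \<psi> (- (c * b)) * f c k)"
  have q2: "q \<ge> 2" using q_ge q_def by simp
  have "of_nat q * of_nat M = (\<Sum>c\<in>UNIV. \<psi> (- (c * b)) * E c k)" unfolding q_def M_def by (rule count[symmetric])
  also have "\<dots> = E 0 k + (\<Sum>c\<in>-{0}. \<psi> (- (c * b)) * E c k)" by (simp add: sum_split0 psi0)
  also have "(\<Sum>c\<in>-{0}. \<psi> (- (c * b)) * E c k) = K k * (\<Sum>c\<in>-{0}. \<psi> (- (c * b))) + X"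
    unfolding X_def f_def by (simp add: sum_distrib_left algebra_simps sum.distrib sum_subtractf)
  also have "(\<Sum>c\<in>-{0}. \<psi> (- (c * b))) = -1"
  proof -
    have "(\<Sum>c\<in>UNIV. \<psi> (c * (- b))) = 0" using b orth[of "- b"] by simp
    hence "1 + (\<Sum>c\<in>-{0}. \<psi> (c * (- b))) = 0" by (simp add: sum_split0 psi0)
    thus ?thesis by (simp add: eq_neg_iff_add_eq_0 add.commute)
  qed
  finally have eq: "of_nat q * of_nat M - of_nat (n choose k) = - K k + X" by (simp add: E_0k)
  have nX: "of_nat n * X = (\<Sum>c\<in>-{0}. f c k * S ((- b) * c))"
  proof -
    have Xh: "X = (\<Sum>c\<in>-{0}. \<psi> (- (c * h * b)) * f c k)" if h: "h \<in> H" for h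
    proof -
      have h0: "h \<noteq> 0" using h H0 by auto
      have "X = (\<Sum>c\<in>-{0}. \<psi> (- ((c * h) * b)) * f (c * h) k)"
        unfolding X_def by (rule sum.reindex_bij_betw[OF bij_mult_nz''[OF h0], symmetric])
      also have "\<dots> = (\<Sum>c\<in>-{0}. \<psi> (- (c * h * b)) * f c k)" by (simp add: f_inv[OF h])
      finally show ?thesis .
    qed
    have "of_nat n * X = (\<Sum>h\<in>H. X)" by simp
    also have "\<dots> = (\<Sum>h\<in>H. \<Sum>c\<in>-{0}. \<psi> (- (c * h * b)) * f c k)" by (rule sum.cong[OF refl], rule Xh)
    also have "\<dots> = (\<Sum>c\<in>-{0}. \<Sum>h\<in>H. \<psi> (- (c * h * b)) * f c k)" by (rule sum.swap)
    also have "\<dots> = (\<Sum>c\<in>-{0}. f c k * S ((- b) * c))"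
      unfolding S_def by (intro sum.cong refl) (simp add: sum_distrib_left mult_ac)
    finally show ?thesis .
  qed
  have "real n * cmod X = cmod (of_nat n * X)" by (simp add: norm_mult)
  also have "\<dots> \<le> Lam (\<lambda>c. f c k) * Lam (\<lambda>c. S ((- b) * c))" unfolding nX by (rule Lam_CS)
  also have "\<dots> \<le> Lam (\<lambda>c. f c k) * sqrt (real q * real n)"
  proof (rule mult_left_mono)
    show "Lam (\<lambda>c. S ((- b) * c)) \<le> sqrt (real q * real n)" unfolding q_def by (rule Lam_S) (use b in simp)
    show "0 \<le> Lam (\<lambda>c. f c k)" by (rule Lam_nonneg)
  qed
  finally have Xb: "real n * cmod X \<le> Lam (\<lambda>c. f c k) * (sqrt (real q) * sqrt (real n))"
    by (simp add: real_sqrt_mult)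
  have sn: "sqrt (real n) > 0" by (rule sqn_pos)
  have Xb2: "cmod X \<le> sqrt (real q) * (Lam (\<lambda>c. f c k) / sqrt (real n))"
  proof -
    have "sqrt (real n) * (sqrt (real n) * cmod X) = (sqrt (real n) * sqrt (real n)) * cmod X"
      by (simp only: mult.assoc)
    also have "\<dots> = real n * cmod X" by (simp only: real_sqrt_mult_self)
    also have "\<dots> \<le> Lam (\<lambda>c. f c k) * (sqrt (real q) * sqrt (real n))" by (rule Xb)
    also have "\<dots> = sqrt (real n) * (Lam (\<lambda>c. f c k) * sqrt (real q))" by (simp only: mult_ac)
    finally have "sqrt (real n) * (sqrt (real n) * cmod X) \<le> sqrt (real n) * (Lam (\<lambda>c. f c k) * sqrt (real q))" .
    hence "sqrt (real n) * cmod X \<le> Lam (\<lambda>c. f c k) * sqrt (real q)"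
      using sn by (rule mult_left_le_imp_le)
    thus ?thesis using sn by (simp add: field_simps)
  qed
  have "\<bar>real q * real M - real (n choose k)\<bar> = cmod (of_nat q * of_nat M - of_nat (n choose k) :: complex)"
    by (metis norm_of_real of_real_diff of_real_mult of_real_of_nat_eq)
  also have "\<dots> = cmod (- K k + X)" by (simp only: eq)
  also have "\<dots> \<le> cmod (K k) + cmod X" by (metis norm_minus_cancel norm_triangle_ineq)
  also have "\<dots> \<le> sqrt (real q) * G k"
  proof -
    have "1 * cmod (K k) \<le> sqrt (real q) * cmod (K k)"
      using sq_ge1 unfolding q_def by (intro mult_right_mono) auto
    thus ?thesis using Xb2 unfolding G_def by (simp add: distrib_left)
  qed
  finally have main: "\<bar>real q * real M - real (n choose k)\<bar> \<le> sqrt (real q) * G k" .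
  have qpos: "real q > 0" using q2 by simp
  have "\<bar>real M - real (n choose k) / real q\<bar> = \<bar>real q * real M - real (n choose k)\<bar> / real q"
    using qpos by (simp add: field_simps abs_divide)
  also have "\<dots> \<le> sqrt (real q) * G k / real q" using main qpos by (intro divide_right_mono) auto
  also have "\<dots> = G k / sqrt (real q)"
  proof -
    have "real q = sqrt (real q) * sqrt (real q)" by simp
    moreover have "sqrt (real q) > 0" using qpos by simp
    ultimately show ?thesis by (metis nonzero_mult_divide_mult_cancel_left order_less_irrefl times_divide_eq_right)
  qed
  finally show ?thesis unfolding q_def M_def .
qed

lemma final_z:
  shows "\<bar>real (subset_sum_count H k 0) - real (n choose k) / real (card (UNIV::'a set))\<bar> \<le> G k"
proof -
  define q where "q = card (UNIV::'a set)"
  define M where "M = subset_sum_count H k 0"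
  define X where "X = (\<Sum>c\<in>-{0::'a}. f c k)"
  have q2: "q \<ge> 2" using q_ge q_def by simp
  have "of_nat q * of_nat M = (\<Sum>c\<in>UNIV. \<psi> (- (c * 0)) * E c k)" unfolding q_def M_def by (rule count[symmetric])
  also have "\<dots> = E 0 k + (\<Sum>c\<in>-{0}. E c k)" by (simp add: sum_split0 psi0)
  also have "(\<Sum>c\<in>-{0}. E c k) = of_nat (q - 1) * K k + X"
    unfolding X_def f_def q_def by (simp add: sum.distrib card_nz sum_subtractf)
  finally have eq: "of_nat q * of_nat M - of_nat (n choose k) = of_nat (q - 1) * K k + X" by (simp add: E_0k)
  have "cmod X = cmod (\<Sum>c\<in>-{0::'a}. f c k * 1)" by (simp add: X_def)
  also have "\<dots> \<le> Lam (\<lambda>c. f c k) * Lam (\<lambda>c. 1)" by (rule Lam_CS)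
  also have "Lam (\<lambda>c::'a. 1) = sqrt (real (q - 1))" by (simp add: Lam_def L2_set_constant card_nz q_def)
  finally have Xb: "cmod X \<le> Lam (\<lambda>c. f c k) * sqrt (real (q - 1))" .
  have sn: "sqrt (real n) > 0" by (rule sqn_pos)
  have nq: "real n \<le> real q" using n_le q_def by simp
  have "Lam (\<lambda>c. f c k) * sqrt (real (q - 1)) \<le> real q * (Lam (\<lambda>c. f c k) / sqrt (real n))"
  proof -
    have "sqrt (real (q - 1)) * sqrt (real n) \<le> sqrt (real q) * sqrt (real q)"
      using nq q2 by (intro mult_mono) auto
    also have "\<dots> = real q" by simp
    finally have "sqrt (real (q - 1)) \<le> real q / sqrt (real n)" using sn by (simp add: field_simps)
    hence "Lam (\<lambda>c. f c k) * sqrt (real (q - 1)) \<le> Lam (\<lambda>c. f c k) * (real q / sqrt (real n))"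
      by (intro mult_left_mono Lam_nonneg)
    thus ?thesis by (simp add: mult_ac)
  qed
  with Xb have Xb2: "cmod X \<le> real q * (Lam (\<lambda>c. f c k) / sqrt (real n))" by linarith
  have "\<bar>real q * real M - real (n choose k)\<bar> = cmod (of_nat q * of_nat M - of_nat (n choose k) :: complex)"
    by (metis norm_of_real of_real_diff of_real_mult of_real_of_nat_eq)
  also have "\<dots> = cmod (of_nat (q - 1) * K k + X)" by (simp only: eq)
  also have "\<dots> \<le> real (q - 1) * cmod (K k) + cmod X" by (metis norm_triangle_ineq norm_mult norm_of_nat)
  also have "\<dots> \<le> real q * G k"
  proof -
    have "real (q - 1) * cmod (K k) \<le> real q * cmod (K k)" by (intro mult_right_mono) auto
    thus ?thesis using Xb2 unfolding G_def by (simp add: distrib_left)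
  qed
  finally have main: "\<bar>real q * real M - real (n choose k)\<bar> \<le> real q * G k" .
  have qpos: "real q > 0" using q2 by simp
  have "\<bar>real M - real (n choose k) / real q\<bar> = \<bar>real q * real M - real (n choose k)\<bar> / real q"
    using qpos by (simp add: field_simps abs_divide)
  also have "\<dots> \<le> real q * G k / real q" using main qpos by (intro divide_right_mono) auto
  also have "\<dots> = G k" using qpos by simp
  finally show ?thesis unfolding q_def M_def .
qed

end



theorem mainTheorem1:
  fixes H :: "'a::{field,finite} set" and m k :: nat
  defines "q \<equiv> card (UNIV :: 'a set)" and "p \<equiv> semiring_char TYPE('a)"
  assumes "m > 0" and "m dvd q - 1"
    and "mult_subgroup H" and "card H = (q - 1) div m"
    and "1 \<le> k" and "k \<le> (q - 1) div m"
  shows "(\<forall>b::'a. b \<noteq> 0 \<longrightarrow>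
           \<bar>real (subset_sum_count H k b) - (1 / real q) * real (((q - 1) div m) choose k)\<bar>
             \<le> (2 / sqrt (real q)) * ((sqrt (real q) + real k + real q / (real m * real p)) gchoose k))
      \<and> \<bar>real (subset_sum_count H k 0) - (1 / real q) * real (((q - 1) div m) choose k)\<bar>
             \<le> (sqrt (real q) + real k + real q / (real m * real p)) gchoose k"
proof -
  obtain \<psi> :: "'a \<Rightarrow> complex" where h1: "\<And>x y. \<psi> (x + y) = \<psi> x * \<psi> y"
    and h2: "\<And>x. cmod (\<psi> x) = 1" and h3: "\<exists>g0. \<psi> g0 \<noteq> 1"
    using exists_char[where 'a='a] by blast
  interpret C: chr \<psi> H
    using h1 h2 h3 \<open>mult_subgroup H\<close> by unfold_locales auto
  have ppos: "p > 0" unfolding p_def using CHAR_facts(2)[where 'a='a] by simp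
  have q2: "q \<ge> 2" unfolding q_def using C.q_ge .
  define \<alpha> where "\<alpha> = real q / (real m * real p)"
  define A where "A = sqrt (real q) + \<alpha>"
  have \<alpha>0: "\<alpha> \<ge> 0" unfolding \<alpha>_def by simp
  have A0: "A \<ge> 0" unfolding A_def using \<alpha>0 by simp
  define T where "T k = (sqrt (real q) + real k + real q / (real m * real p)) gchoose k" for k
  have TT: "T i = TT A i" for i
  proof -
    have "TT A i = (A + real i) gchoose i" by (rule TT_def[OF A0])
    thus ?thesis unfolding T_def A_def \<alpha>_def by (simp add: add_ac)
  qed
  have nle: "real (card H) \<le> real p * \<alpha>"
  proof -
    have "real (card H) = real ((q - 1) div m)" using \<open>card H = (q - 1) div m\<close> by simp
    also have "\<dots> = real (q - 1) / real m" by (rule real_of_nat_div[OF \<open>m dvd q - 1\<close>])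
    also have "\<dots> \<le> real q / real m" using \<open>m > 0\<close> by (intro divide_right_mono) auto
    also have "\<dots> = real p * \<alpha>" unfolding \<alpha>_def using ppos \<open>m > 0\<close> by (simp add: field_simps)
    finally show ?thesis .
  qed
  have Tnn: "T i \<ge> 0" for i unfolding TT by (rule TT_nonneg[OF A0])
  have T0: "T 0 \<ge> 1" unfolding TT TT_0[OF A0] by simp
  have Trec: "(\<Sum>j=1..i. C.w j * T (i - j)) \<le> real i * T i" if i: "i > 0" for i
  proof -
    have "(\<Sum>j=1..i. C.w j * T (i - j)) = (\<Sum>j=1..i. (if p dvd j then real (card H) else sqrt (real q)) * TT A (i - j))"
      unfolding TT C.w_def p_def q_def by simp
    also have "\<dots> \<le> real i * TT A i"
      by (rule TT_rec[OF A0 ppos _ _ nle _ i]) (auto simp: A_def)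
    finally show ?thesis unfolding TT .
  qed
  have GT: "C.G k \<le> T k" by (rule C.G_bound[OF Tnn T0 Trec])
  have sqpos: "sqrt (real q) > 0" using q2 by simp
  have B: "(1 / real q) * real (((q - 1) div m) choose k) = real (card H choose k) / real q"
    using \<open>card H = (q - 1) div m\<close> by simp
  show ?thesis
  proof
    show "\<forall>b::'a. b \<noteq> 0 \<longrightarrow>
           \<bar>real (subset_sum_count H k b) - (1 / real q) * real (((q - 1) div m) choose k)\<bar>
             \<le> (2 / sqrt (real q)) * ((sqrt (real q) + real k + real q / (real m * real p)) gchoose k)"
    proof (intro allI impI)
      fix b :: 'a assume b: "b \<noteq> 0"
      have "\<bar>real (subset_sum_count H k b) - (1 / real q) * real (((q - 1) div m) choose k)\<bar>
          \<le> C.G k / sqrt (real q)"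
      proof -
        have "\<bar>real (subset_sum_count H k b) - real (card H choose k) / real q\<bar> \<le> C.G k / sqrt (real q)"
          using C.final_nz[OF b] by (simp add: q_def)
        thus ?thesis by (simp only: B)
      qed
      also have "\<dots> \<le> T k / sqrt (real q)" using GT sqpos by (intro divide_right_mono) auto
      also have "\<dots> \<le> (2 / sqrt (real q)) * T k" using Tnn[of k] sqpos by (simp add: field_simps)
      finally show "\<bar>real (subset_sum_count H k b) - (1 / real q) * real (((q - 1) div m) choose k)\<bar>
             \<le> (2 / sqrt (real q)) * ((sqrt (real q) + real k + real q / (real m * real p)) gchoose k)"
        unfolding T_def .
    qed
  next
    have "\<bar>real (subset_sum_count H k 0) - (1 / real q) * real (((q - 1) div m) choose k)\<bar> \<le> C.G k"
    proof -
      have "\<bar>real (subset_sum_count H k 0) - real (card H choose k) / real q\<bar> \<le> C.G k"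
        using C.final_z by (simp add: q_def)
      thus ?thesis by (simp only: B)
    qed
    also have "\<dots> \<le> T k" by (rule GT)
    finally show "\<bar>real (subset_sum_count H k 0) - (1 / real q) * real (((q - 1) div m) choose k)\<bar>
             \<le> (sqrt (real q) + real k + real q / (real m * real p)) gchoose k" unfolding T_def .
  qed
qed


end
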